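(* Let $(X,f)$ be a dynamical system and $\mathbf{a}=(a_1,\dots,a_r)\in\mathbb{N}^r_*$. The following are equivalent: (1) $(X,f)$ is $\Delta$-$\mathbf{a}$-transitive; (2) $(X,f)$ is $\mathcal{F}[\mathbf{a}]$-point transitive; (3) $Trans_{\mathcal{F}[\mathbf{a}]}(X,f)$ is residual in $X$.
   Context: A dynamical system is a pair $(X,f)$ with $X$ a compact metric space and $f:X\to X$ continuous. $\mathbb{N}=\{1,2,\dots\}$, $\mathbb{Z}_+=\{0,1,2,\dots\}$; $\mathbb{N}^r_*=\{(n_1,\dots,n_r)\in\mathbb{N}^r: n_1<\dots<n_r\}$. $N(x,U)=\{n\in\mathbb{N}: f^n(x)\in U\}$. For a family $\mathcal{F}$ of subsets of $\mathbb{N}$, $x$ is an $\mathcal{F}$-transitive point if $N(x,U)\in\mathcal{F}$ for every non-empty open $U\subset X$; $Trans_{\mathcal{F}}(X,f)$ is the set of such points; $(X,f)$ is $\mathcal{F}$-point transitive if it is non-empty. For a system $(Y,g)$, $y$ is a transitive point if its $\omega$-limit set equals $Y$. $(X,f)$ is $\Delta$-$\mathbf{a}$-transitive if there is $x\in X$ such that $(x,\dots,x)$ is a transitive point of $(X^r,f^{a_1}\times\dots\times f^{a_r})$. $\mathcal{F}[\mathbf{a}]$ is the collection of all $F\subset\mathbb{N}$ such that for every $(n_1,\dots,n_r)\in\mathbb{Z}_+^r$ there is $k\in\mathbb{N}$ with $ka_i+n_i\in F$ for all $i=1,\dots,r$. *)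

theory Defs
  imports "HOL-Analysis.Analysis"
begin

definition strict_incr_pos :: "nat list \<Rightarrow> bool" where
  "strict_incr_pos a \<longleftrightarrow> a \<noteq> [] \<and> sorted_wrt (<) a \<and> (\<forall>i<length a. a ! i \<ge> 1)"

definition omega_limit_in :: "'b topology \<Rightarrow> ('b \<Rightarrow> 'b) \<Rightarrow> 'b \<Rightarrow> 'b set" where
  "omega_limit_in T g y = {z \<in> topspace T. \<forall>V. openin T V \<and> z \<in> V \<longrightarrow> infinite {n. (g ^^ n) y \<in> V}}"

definition transitive_point_in :: "'b topology \<Rightarrow> ('b \<Rightarrow> 'b) \<Rightarrow> 'b \<Rightarrow> bool" where
  "transitive_point_in T g y \<longleftrightarrow> omega_limit_in T g y = topspace T"

text \<open>X^r with the product topology (points are extensional functions on {..<r}).\<close>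
definition power_top :: "'a::topological_space set \<Rightarrow> nat \<Rightarrow> (nat \<Rightarrow> 'a) topology" where
  "power_top X r = product_topology (\<lambda>i. top_of_set X) {..<r}"

definition prod_map :: "('a \<Rightarrow> 'a) \<Rightarrow> nat list \<Rightarrow> (nat \<Rightarrow> 'a) \<Rightarrow> (nat \<Rightarrow> 'a)" where
  "prod_map f a = (\<lambda>z. restrict (\<lambda>i. (f ^^ (a ! i)) (z i)) {..<length a})"

definition diag_point :: "nat \<Rightarrow> 'a \<Rightarrow> (nat \<Rightarrow> 'a)" where
  "diag_point r x = restrict (\<lambda>i. x) {..<r}"

definition Delta_a_transitive :: "'a::topological_space set \<Rightarrow> ('a \<Rightarrow> 'a) \<Rightarrow> nat list \<Rightarrow> bool" where
  "Delta_a_transitive X f a \<longleftrightarrow>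
     (\<exists>x\<in>X. transitive_point_in (power_top X (length a)) (prod_map f a) (diag_point (length a) x))"

definition hitting_times :: "('a \<Rightarrow> 'a) \<Rightarrow> 'a \<Rightarrow> 'a set \<Rightarrow> nat set" where
  "hitting_times f x U = {n. n \<ge> 1 \<and> (f ^^ n) x \<in> U}"

definition Fam_a :: "nat list \<Rightarrow> nat set set" where
  "Fam_a a = {F. F \<subseteq> {1..} \<and>
      (\<forall>n :: nat \<Rightarrow> nat. \<exists>k\<ge>1. \<forall>i<length a. k * a ! i + n i \<in> F)}"

definition Trans_F :: "nat set set \<Rightarrow> 'a::topological_space set \<Rightarrow> ('a \<Rightarrow> 'a) \<Rightarrow> 'a set" where
  "Trans_F \<F> X f = {x \<in> X. \<forall>U. openin (top_of_set X) U \<and> U \<noteq> {} \<longrightarrow> hitting_times f x U \<in> \<F>}"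

definition residual_in :: "'a::topological_space set \<Rightarrow> 'a set \<Rightarrow> bool" where
  "residual_in X S \<longleftrightarrow> S \<subseteq> X \<and>
     (\<exists>\<G>. countable \<G> \<and> (\<forall>G\<in>\<G>. openin (top_of_set X) G \<and> X \<subseteq> closure G) \<and> X \<inter> \<Inter>\<G> \<subseteq> S)"

end

theory Submission
  imports Defs
begin


lemma iter_cont:
  assumes "continuous_on X f" "f ` X \<subseteq> X"
  shows "continuous_on X (f^^n) \<and> (f^^n) ` X \<subseteq> X"
proof (induction n)
  case 0 then show ?case by (simp add: continuous_on_id)
next
  case (Suc n)
  then show ?case using assms
    by (auto intro!: continuous_on_compose2[of X f X "f^^n"] simp: image_subset_iff)
qed

lemma pow_diag:
  "(prod_map f a ^^ m) (diag_point (length a) x) = restrict (\<lambda>i. (f^^(m * a!i)) x) {..<length a}"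
proof (induction m)
  case 0 then show ?case by (simp add: diag_point_def)
next
  case (Suc m)
  have "(prod_map f a ^^ Suc m) (diag_point (length a) x) = prod_map f a ((prod_map f a ^^ m) (diag_point (length a) x))"
    by simp
  also have "\<dots> = prod_map f a (restrict (\<lambda>i. (f^^(m * a!i)) x) {..<length a})"
    by (simp only: Suc)
  also have "\<dots> = restrict (\<lambda>i. (f^^(Suc m * a!i)) x) {..<length a}"
    by (auto simp: prod_map_def funpow_add)
  finally show ?case .
qed

lemma fam_inst:
  assumes "F \<in> Fam_a a" shows "\<exists>k\<ge>1. \<forall>i<length a. k * a ! i + n i \<in> F"
  using assms unfolding Fam_a_def by blast

lemma fam_nonempty:
  assumes "strict_incr_pos a" "F \<in> Fam_a a" shows "\<exists>t. t \<in> F"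
proof -
  from fam_inst[OF assms(2), of "\<lambda>_. 0"] obtain k where "\<forall>i<length a. k * a ! i + 0 \<in> F"
    by blast
  moreover have "0 < length a" using assms(1) by (simp add: strict_incr_pos_def)
  ultimately show ?thesis by auto
qed

lemma partA:
  assumes cont: "continuous_on X f" and inv: "f ` X \<subseteq> X" and a: "strict_incr_pos a"
    and D: "Delta_a_transitive X f a"
  shows "Trans_F (Fam_a a) X f \<noteq> {}"
proof -
  define r where "r = length a"
  have r0: "0 < r" using a by (simp add: strict_incr_pos_def r_def)
  have a1: "\<And>i. i < r \<Longrightarrow> a ! i \<ge> 1" using a by (simp add: strict_incr_pos_def r_def)
  obtain x where xX: "x \<in> X" and tr: "transitive_point_in (power_top X r) (prod_map f a) (diag_point r x)"
    using D unfolding Delta_a_transitive_def r_def by blast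
  have key: "infinite {m. (prod_map f a ^^ m) (diag_point r x) \<in> PiE {..<r} V}"
    if V: "\<And>i. i < r \<Longrightarrow> openin (top_of_set X) (V i)" and z: "z \<in> PiE {..<r} V" for V z
  proof -
    have op: "openin (power_top X r) (PiE {..<r} V)"
      unfolding power_top_def by (simp add: openin_PiE_gen V)
    have "z \<in> topspace (power_top X r)"
      using openin_subset[OF op] z by blast
    then have "z \<in> omega_limit_in (power_top X r) (prod_map f a) (diag_point r x)"
      using tr unfolding transitive_point_in_def by simp
    then show ?thesis using op z unfolding omega_limit_in_def by blast
  qed
  have "x \<in> Trans_F (Fam_a a) X f"
    unfolding Trans_F_def
  proof (intro CollectI conjI allI impI xX)
    fix U assume U: "openin (top_of_set X) U \<and> U \<noteq> {}"
    then obtain u where uU: "u \<in> U" by blast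
    show "hitting_times f x U \<in> Fam_a a"
      unfolding Fam_a_def
    proof (intro CollectI conjI allI)
      show "hitting_times f x U \<subseteq> {1..}" by (auto simp: hitting_times_def)
      fix n :: "nat \<Rightarrow> nat"
      have ex: "\<exists>y\<in>X. (f^^n i) y \<in> U" if i: "i < r" for i
      proof -
        have "infinite {m. (prod_map f a ^^ m) (diag_point r x) \<in> PiE {..<r} (\<lambda>_. U)}"
          using key[of "\<lambda>_. U" "restrict (\<lambda>_. u) {..<r}"] U uU by auto
        then obtain m where m: "m \<ge> n i" "(prod_map f a ^^ m) (diag_point r x) \<in> PiE {..<r} (\<lambda>_. U)"
          unfolding infinite_nat_iff_unbounded_le by blast
        have "(f^^(m * a!0)) x \<in> U"
          using m(2) r0 unfolding r_def pow_diag by auto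
        moreover have "m * a!0 \<ge> n i" using a1[OF r0] m(1)
          by (metis le_trans mult.right_neutral mult_le_mono2)
        ultimately have "(f^^(n i)) ((f^^(m * a!0 - n i)) x) \<in> U"
          by (metis funpow_add o_apply le_add_diff_inverse)
        moreover have "(f^^(m * a!0 - n i)) x \<in> X" using iter_cont[OF cont inv] xX by blast
        ultimately show ?thesis by blast
      qed
      define V where "V i = X \<inter> (f^^n i) -` U" for i
      have Vo: "openin (top_of_set X) (V i)" for i
        unfolding V_def using iter_cont[OF cont inv, of "n i"] U
        by (intro continuous_openin_preimage[of X "f^^n i" X U]) auto
      have "\<forall>i. \<exists>yi. i < r \<longrightarrow> yi \<in> V i" using ex unfolding V_def by blast
      then obtain y where y: "\<And>i. i < r \<Longrightarrow> y i \<in> V i"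
        by metis
      have "infinite {m. (prod_map f a ^^ m) (diag_point r x) \<in> PiE {..<r} V}"
        using key[of V "restrict y {..<r}"] Vo y by auto
      then obtain m where m: "m \<ge> 1" "(prod_map f a ^^ m) (diag_point r x) \<in> PiE {..<r} V"
        unfolding infinite_nat_iff_unbounded_le by blast
      have "\<forall>i<length a. m * a ! i + n i \<in> hitting_times f x U"
      proof (intro allI impI)
        fix i assume i: "i < length a"
        have "(f^^(m * a!i)) x \<in> V i" using m(2) i unfolding r_def pow_diag by auto
        then have "(f^^(n i + m * a!i)) x \<in> U" unfolding V_def by (simp add: funpow_add)
        moreover have "m * a!i \<ge> 1" using a1[of i] i m(1) r_def by (simp add: one_le_mult_iff)
        then have "1 \<le> m * a ! i + n i" by linarith
        ultimately show "m * a ! i + n i \<in> hitting_times f x U"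
          by (simp add: hitting_times_def add.commute)
      qed
      then show "\<exists>k\<ge>1. \<forall>i<length a. k * a ! i + n i \<in> hitting_times f x U" using m(1) by blast
    qed
  qed
  then show ?thesis by blast
qed


lemma partB:
  assumes cont: "continuous_on X f" and inv: "f ` X \<subseteq> X" and a: "strict_incr_pos a"
    and T: "Trans_F (Fam_a a) X f \<noteq> {}"
  shows "Delta_a_transitive X f a"
proof -
  define r where "r = length a"
  have r0: "0 < r" using a by (simp add: strict_incr_pos_def r_def)
  have a1: "\<And>i. i < r \<Longrightarrow> a ! i \<ge> 1" using a by (simp add: strict_incr_pos_def r_def)
  obtain x where xT: "x \<in> Trans_F (Fam_a a) X f" using T by blast
  then have xX: "x \<in> X" and xF: "\<And>U. openin (top_of_set X) U \<Longrightarrow> U \<noteq> {} \<Longrightarrow> hitting_times f x U \<in> Fam_a a"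
    unfolding Trans_F_def by auto
  have "transitive_point_in (power_top X r) (prod_map f a) (diag_point r x)"
    unfolding transitive_point_in_def
  proof
    show "omega_limit_in (power_top X r) (prod_map f a) (diag_point r x) \<subseteq> topspace (power_top X r)"
      unfolding omega_limit_in_def by blast
    show "topspace (power_top X r) \<subseteq> omega_limit_in (power_top X r) (prod_map f a) (diag_point r x)"
    proof
      fix z assume z: "z \<in> topspace (power_top X r)"
      have "infinite {n. (prod_map f a ^^ n) (diag_point r x) \<in> V}"
        if V: "openin (power_top X r) V" "z \<in> V" for V
      proof -
        obtain U where Uf: "\<forall>i\<in>{..<r}. openin (top_of_set X) (U i)" and zU: "z \<in> PiE {..<r} U"
          and UV: "PiE {..<r} U \<subseteq> V"
          using V unfolding power_top_def openin_product_topology_alt by force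
        have Une: "U i \<noteq> {}" if "i < r" for i using zU that by auto
        have "\<forall>i. \<exists>t. i < r \<longrightarrow> (f^^t) x \<in> U i"
        proof (intro allI)
          fix i show "\<exists>t. i < r \<longrightarrow> (f^^t) x \<in> U i"
          proof (cases "i < r")
            case True
            then obtain t where "t \<in> hitting_times f x (U i)"
              using fam_nonempty[OF a xF[OF _ Une]] Uf by blast
            then show ?thesis by (auto simp: hitting_times_def)
          qed auto
        qed
        then obtain t where t: "\<And>i. i < r \<Longrightarrow> (f^^t i) x \<in> U i" by metis
        define W where "W = (\<Inter>i\<in>{..<r}. X \<inter> (f^^t i) -` U i)"
        have Wo: "openin (top_of_set X) W"
          unfolding W_def
        proof (rule openin_INT2)
          show "finite {..<r}" by simp
          show "{..<r} \<noteq> {}" using r0 by auto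
          fix i assume "i \<in> {..<r}"
          then show "openin (top_of_set X) (X \<inter> (f ^^ t i) -` U i)"
            using iter_cont[OF cont inv, of "t i"] Uf
            by (intro continuous_openin_preimage[of X "f^^t i" X "U i"]) auto
        qed
        have xW: "x \<in> W" unfolding W_def using xX t by auto
        have WF: "hitting_times f x W \<in> Fam_a a" using xF[OF Wo] xW by blast
        show ?thesis
          unfolding infinite_nat_iff_unbounded_le
        proof
          fix M
          define c where "c = M + (\<Sum>i<r. t i)"
          have tc: "t i \<le> c * a!i" if "i < r" for i
          proof -
            have "t i \<le> (\<Sum>i<r. t i)" using that by (intro member_le_sum) auto
            also have "\<dots> \<le> c" unfolding c_def by simp
            also have "c \<le> c * a!i" using a1[OF that] by simp
            finally show ?thesis .
          qed
          obtain k where k: "k \<ge> 1" "\<forall>i<length a. k * a ! i + (c * a!i - t i) \<in> hitting_times f x W"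
            using fam_inst[OF WF, of "\<lambda>i. c * a!i - t i"] by blast
          have "(prod_map f a ^^ (k + c)) (diag_point r x) \<in> PiE {..<r} U"
          proof -
            have "(f^^((k + c) * a!i)) x \<in> U i" if i: "i < r" for i
            proof -
              have "(f^^(k * a ! i + (c * a!i - t i))) x \<in> W" using k(2) i r_def
                by (auto simp: hitting_times_def)
              then have "(f^^t i) ((f^^(k * a ! i + (c * a!i - t i))) x) \<in> U i"
                unfolding W_def using i by blast
              moreover have "t i + (k * a ! i + (c * a!i - t i)) = (k + c) * a!i"
                using tc[OF i] by (simp add: algebra_simps)
              ultimately show ?thesis by (metis funpow_add o_apply)
            qed
            then show ?thesis unfolding r_def pow_diag by auto
          qed
          then show "\<exists>n\<ge>M. n \<in> {n. (prod_map f a ^^ n) (diag_point r x) \<in> V}"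
          proof (intro exI[of _ "k + c"] conjI)
            show "M \<le> k + c" unfolding c_def by simp
          qed (use UV in blast)
        qed
      qed
      then show "z \<in> omega_limit_in (power_top X r) (prod_map f a) (diag_point r x)"
        unfolding omega_limit_in_def using z by blast
    qed
  qed
  then show ?thesis unfolding Delta_a_transitive_def r_def using xX by blast
qed


lemma partC:
  fixes X :: "'a::metric_space set"
  assumes cont: "continuous_on X f" and inv: "f ` X \<subseteq> X" and a: "strict_incr_pos a"
    and T: "Trans_F (Fam_a a) X f \<noteq> {}"
  shows "residual_in X (Trans_F (Fam_a a) X f)"
proof -
  define r where "r = length a"
  have r0: "0 < r" using a by (simp add: strict_incr_pos_def r_def)
  obtain x0 where xT: "x0 \<in> Trans_F (Fam_a a) X f" using T by blast
  then have xX: "x0 \<in> X" and xF: "\<And>U. openin (top_of_set X) U \<Longrightarrow> U \<noteq> {} \<Longrightarrow> hitting_times f x0 U \<in> Fam_a a"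
    unfolding Trans_F_def by auto
  have itX: "\<And>n y. y \<in> X \<Longrightarrow> (f^^n) y \<in> X" using iter_cont[OF cont inv] by blast
  define Orb where "Orb = range (\<lambda>s. (f^^s) x0)"
  have OrbX: "Orb \<subseteq> X" unfolding Orb_def using itX xX by auto
  have dense: "\<exists>s. dist ((f^^s) x0) y < e" if y: "y \<in> X" and e: "e > 0" for y e
  proof -
    have "openin (top_of_set X) (X \<inter> ball y e)" by (simp add: openin_open_Int)
    moreover have "X \<inter> ball y e \<noteq> {}" using y e by auto
    ultimately obtain s where "s \<in> hitting_times f x0 (X \<inter> ball y e)"
      using fam_nonempty[OF a xF] by blast
    then show ?thesis by (auto simp: hitting_times_def dist_commute)
  qed
  define G where "G = (\<lambda>(t::nat, m::nat, xs::nat list). {y\<in>X. \<exists>k\<ge>1. \<forall>i<r. (f^^(k * a!i + xs!i)) y \<in> ball ((f^^t) x0) (1 / Suc m)})"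
  define \<G> where "\<G> = range G"
  have "countable \<G>" unfolding \<G>_def by simp
  moreover have "openin (top_of_set X) (G p) \<and> X \<subseteq> closure (G p)" for p
  proof (cases p)
    case (fields t m xs)
    define B where "B = ball ((f^^t) x0) (1 / Suc m)"
    have Geq: "G p = (\<Union>k\<in>{1..}. \<Inter>i\<in>{..<r}. X \<inter> (f^^(k * a!i + xs!i)) -` B)"
    proof (rule set_eqI)
      fix y
      have "y \<in> G p \<longleftrightarrow> y \<in> X \<and> (\<exists>k\<ge>1. \<forall>i<r. (f^^(k * a!i + xs!i)) y \<in> B)"
        unfolding fields G_def B_def by simp
      also have "\<dots> \<longleftrightarrow> y \<in> (\<Union>k\<in>{1..}. \<Inter>i\<in>{..<r}. X \<inter> (f^^(k * a!i + xs!i)) -` B)"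
        using r0 by auto
      finally show "y \<in> G p \<longleftrightarrow> y \<in> (\<Union>k\<in>{1..}. \<Inter>i\<in>{..<r}. X \<inter> (f^^(k * a!i + xs!i)) -` B)" .
    qed
    have "openin (top_of_set X) (G p)"
      unfolding Geq
    proof (intro openin_Union ballI, clarify)
      fix k :: nat
      show "openin (top_of_set X) (\<Inter>i\<in>{..<r}. X \<inter> (f^^(k * a!i + xs!i)) -` B)"
      proof (rule openin_INT2)
        show "finite {..<r}" by simp
        show "{..<r} \<noteq> {}" using r0 by auto
        fix i assume "i \<in> {..<r}"
        show "openin (top_of_set X) (X \<inter> (f^^(k * a!i + xs!i)) -` B)"
          using iter_cont[OF cont inv, of "k * a!i + xs!i"] unfolding B_def
          by (intro continuous_openin_preimage[of X _ UNIV]) auto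
      qed
    qed
    moreover have "Orb \<subseteq> G p"
    proof
      fix z assume "z \<in> Orb"
      then obtain s where zs: "z = (f^^s) x0" unfolding Orb_def by blast
      have "openin (top_of_set X) (X \<inter> B)" by (simp add: openin_open_Int B_def)
      moreover have "X \<inter> B \<noteq> {}" using itX[OF xX, of t] unfolding B_def by auto
      ultimately have "hitting_times f x0 (X \<inter> B) \<in> Fam_a a" using xF by blast
      then obtain k where k: "k \<ge> 1" "\<forall>i<length a. k * a ! i + (xs!i + s) \<in> hitting_times f x0 (X \<inter> B)"
        using fam_inst[of _ a "\<lambda>i. xs!i + s"] by blast
      have "(f^^(k * a!i + xs!i)) z \<in> B" if "i < r" for i
      proof -
        have "(f^^(k * a ! i + (xs!i + s))) x0 \<in> B" using k(2) that r_def by (auto simp: hitting_times_def)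
        moreover have "k * a ! i + (xs!i + s) = (k * a!i + xs!i) + s" by simp
        ultimately show ?thesis unfolding zs by (metis funpow_add o_apply)
      qed
      then show "z \<in> G p" unfolding fields G_def B_def using k(1) \<open>z \<in> Orb\<close> OrbX by auto
    qed
    moreover have "X \<subseteq> closure Orb"
    proof
      fix y assume "y \<in> X"
      then show "y \<in> closure Orb" unfolding closure_approachable Orb_def using dense by blast
    qed
    ultimately show ?thesis using closure_mono by blast
  qed
  moreover have "X \<inter> \<Inter>\<G> \<subseteq> Trans_F (Fam_a a) X f"
  proof
    fix y assume y: "y \<in> X \<inter> \<Inter>\<G>"
    then have yX: "y \<in> X" and yG: "\<And>p. y \<in> G p" unfolding \<G>_def by auto
    show "y \<in> Trans_F (Fam_a a) X f"
      unfolding Trans_F_def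
    proof (intro CollectI conjI allI impI yX)
      fix U assume U: "openin (top_of_set X) U \<and> U \<noteq> {}"
      then obtain u where uU: "u \<in> U" by blast
      obtain e where e: "e > 0" "\<And>x'. x' \<in> X \<Longrightarrow> dist x' u < e \<Longrightarrow> x' \<in> U"
        using U uU unfolding openin_euclidean_subtopology_iff by meson
      have uX: "u \<in> X" using U uU openin_subset by fastforce
      obtain m :: nat where m: "inverse (real (Suc m)) < e / 2"
        using reals_Archimedean[of "e/2"] e(1) by auto
      obtain t where t: "dist ((f^^t) x0) u < 1 / Suc m"
        using dense[OF uX, of "1 / Suc m"] by auto
      show "hitting_times f y U \<in> Fam_a a"
        unfolding Fam_a_def
      proof (intro CollectI conjI allI)
        show "hitting_times f y U \<subseteq> {1..}" by (auto simp: hitting_times_def)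
        fix n :: "nat \<Rightarrow> nat"
        define xs where "xs = map n [0..<r]"
        from yG[of "(t, m, xs)"] obtain k where k: "k \<ge> 1"
          "\<forall>i<r. (f^^(k * a!i + xs!i)) y \<in> ball ((f^^t) x0) (1 / Suc m)"
          unfolding G_def by auto
        have "k * a ! i + n i \<in> hitting_times f y U" if i: "i < length a" for i
        proof -
          have xi: "xs ! i = n i" unfolding xs_def using i r_def by simp
          have d1: "dist ((f^^t) x0) ((f^^(k * a!i + n i)) y) < 1 / Suc m"
            using k(2) i xi r_def by auto
          have "dist ((f^^(k * a!i + n i)) y) u < e"
          proof -
            have "dist ((f^^(k * a!i + n i)) y) u \<le> dist ((f^^t) x0) ((f^^(k * a!i + n i)) y) + dist ((f^^t) x0) u"
              by (metis dist_commute dist_triangle)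
            also have "\<dots> < 2 / Suc m" using d1 t by (simp add: field_simps)
            also have "\<dots> < e" using m by (simp add: field_simps inverse_eq_divide)
            finally show ?thesis .
          qed
          then have "(f^^(k * a!i + n i)) y \<in> U" using e(2) itX[OF yX] by blast
          moreover have "1 \<le> k * a ! i"
            using k(1) a i by (simp add: strict_incr_pos_def one_le_mult_iff)
          then have "1 \<le> k * a ! i + n i" by linarith
          ultimately show ?thesis by (simp add: hitting_times_def)
        qed
        then show "\<exists>k\<ge>1. \<forall>i<length a. k * a ! i + n i \<in> hitting_times f y U" using k(1) by blast
      qed
    qed
  qed
  moreover have "Trans_F (Fam_a a) X f \<subseteq> X" unfolding Trans_F_def by blast
  ultimately show ?thesis unfolding residual_in_def \<G>_def by blast
qed


lemma partD:
  fixes X :: "'a::metric_space set"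
  assumes X: "compact X" "X \<noteq> {}" and R: "residual_in X S"
  shows "S \<noteq> {}"
proof -
  obtain \<G> where c: "countable \<G>" and G: "\<And>G. G \<in> \<G> \<Longrightarrow> openin (top_of_set X) G \<and> X \<subseteq> closure G"
    and sub: "X \<inter> \<Inter>\<G> \<subseteq> S"
    using R unfolding residual_in_def by blast
  have sp: "locally_compact_space (top_of_set X) \<and> regular_space (top_of_set X)"
    using X(1) by (simp add: Hausdorff_space_subtopology
      compact_Hausdorff_imp_regular_space compact_imp_locally_compact_space
      compact_space_subtopology)
  have "top_of_set X closure_of \<Inter>\<G> = topspace (top_of_set X)"
  proof (rule Baire_category)
    show "completely_metrizable_space (top_of_set X) \<or> locally_compact_space (top_of_set X) \<and> regular_space (top_of_set X)"
      using sp by blast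
    show "countable \<G>" by (rule c)
    fix T assume T: "T \<in> \<G>"
    have "T \<subseteq> X" using G[OF T] openin_subset by fastforce
    then show "openin (top_of_set X) T \<and> top_of_set X closure_of T = topspace (top_of_set X)"
      using G[OF T] by (auto simp: closure_of_subtopology Int_absorb1)
  qed
  then have "X \<inter> closure (X \<inter> \<Inter>\<G>) = X" by (simp add: closure_of_subtopology)
  then have "X \<inter> \<Inter>\<G> \<noteq> {}" using X(2) by auto
  then show ?thesis using sub by blast
qed

theorem theorem5p6:
  fixes X :: "'a::metric_space set" and f :: "'a \<Rightarrow> 'a" and a :: "nat list"
  assumes "compact X" and "X \<noteq> {}" and "continuous_on X f" and "f ` X \<subseteq> X"
    and "strict_incr_pos a"
  shows "(Delta_a_transitive X f a \<longleftrightarrow> Trans_F (Fam_a a) X f \<noteq> {})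
       \<and> (Trans_F (Fam_a a) X f \<noteq> {} \<longleftrightarrow> residual_in X (Trans_F (Fam_a a) X f))"
  using partA[OF assms(3,4,5)] partB[OF assms(3,4,5)] partC[OF assms(3,4,5)] partD[OF assms(1,2)]
  by blast

end
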